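(* For all finite multisets $\Gamma,\Delta$ of $\mathcal{L}_{A_m}^{\Box}$-formulas: the sequent $\Gamma\Rightarrow\Delta$ is derivable in $\mathsf{GK(A_m)}$ if and only if $\mathcal{I}(\Gamma\Rightarrow\Delta)$ is derivable in $\mathsf{K(A_m)}$.
   Context: $\mathcal{L}_{A_m}^{\Box}$-formulas are built from a countably infinite set $\mathrm{Var}$ of variables using binary $\to$ and unary $\Box$. Fix $p_0\in\mathrm{Var}$; $\overline{0}:=p_0\to p_0$, $\neg\varphi:=\varphi\to\overline{0}$, $\varphi\&\psi:=\neg\varphi\to\psi$, $0\varphi:=\overline{0}$, $(n+1)\varphi:=\varphi\&(n\varphi)$. The axiom system $\mathsf{K(A_m)}$ has axiom schemas (B) $(\varphi\to\psi)\to((\psi\to\chi)\to(\varphi\to\chi))$; (C) $(\varphi\to(\psi\to\chi))\to(\psi\to(\varphi\to\chi))$; (I) $\varphi\to\varphi$; (A) $((\varphi\to\psi)\to\psi)\to\varphi$; (K) $\Box(\varphi\to\psi)\to(\Box\varphi\to\Box\psi)$; (D$_n$) $\Box(n\varphi)\to n\Box\varphi$ ($n\ge2$); rules (mp) $\varphi,\varphi\to\psi/\psi$; (nec) $\varphi/\Box\varphi$; (con$_n$) $n\varphi/\varphi$ ($n\ge2$). A sequent $\Gamma\Rightarrow\Delta$ is an ordered pair of finite multisets of formulas; $\Gamma,\Delta$ denotes multiset union, $n\Gamma$ is $\Gamma$ repeated $n$ times, $n[\varphi]$ the multiset with $n$ copies of $\varphi$, $\Box\Gamma=[\Box\varphi:\varphi\in\Gamma]$.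 $\mathcal{I}(\varphi_1,\dots,\varphi_n\Rightarrow\psi_1,\dots,\psi_m):=(\varphi_1\&\dots\&\varphi_n)\to(\psi_1\&\dots\&\psi_m)$, an empty $\&$-combination being $\overline{0}$. The sequent calculus $\mathsf{GK(A_m)}$ has rules: (id) $\Delta\Rightarrow\Delta$ (no premises); (cut) from $\Gamma,\varphi\Rightarrow\Delta$ and $\Pi\Rightarrow\varphi,\Sigma$ infer $\Gamma,\Pi\Rightarrow\Sigma,\Delta$; (mix) from $\Gamma\Rightarrow\Delta$ and $\Pi\Rightarrow\Sigma$ infer $\Gamma,\Pi\Rightarrow\Sigma,\Delta$; (sc$_n$) from $n\Gamma\Rightarrow n\Delta$ infer $\Gamma\Rightarrow\Delta$ ($n\ge2$); ($\to\Rightarrow$) from $\Gamma,\psi\Rightarrow\varphi,\Delta$ infer $\Gamma,\varphi\to\psi\Rightarrow\Delta$; ($\Rightarrow\to$) from $\Gamma,\varphi\Rightarrow\psi,\Delta$ infer $\Gamma\Rightarrow\varphi\to\psi,\Delta$; ($\Box_n$) from $\Gamma\Rightarrow n[\varphi]$ infer $\Box\Gamma\Rightarrow n[\Box\varphi]$ ($n\ge0$). A derivation is a finite tree of sequents in which each node together with its parents is an instance of a rule. *)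

theory Defs
  imports "HOL-Library.Multiset"
begin

datatype fm = Var nat | Imp fm fm | Box fm

definition p0 :: fm where "p0 = Var 0"
definition zero :: fm where "zero = Imp p0 p0"
definition Neg :: "fm \<Rightarrow> fm" where "Neg A = Imp A zero"
definition Fus :: "fm \<Rightarrow> fm \<Rightarrow> fm" where "Fus A B = Imp (Neg A) B"

fun mult :: "nat \<Rightarrow> fm \<Rightarrow> fm" where
  "mult 0 A = zero"
| "mult (Suc n) A = Fus A (mult n A)"

inductive Kthm :: "fm \<Rightarrow> bool" where
  axB: "Kthm (Imp (Imp A B) (Imp (Imp B C) (Imp A C)))"
| axC: "Kthm (Imp (Imp A (Imp B C)) (Imp B (Imp A C)))"
| axI: "Kthm (Imp A A)"
| axA: "Kthm (Imp (Imp (Imp A B) B) A)"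
| axK: "Kthm (Imp (Box (Imp A B)) (Imp (Box A) (Box B)))"
| axD: "n \<ge> 2 \<Longrightarrow> Kthm (Imp (Box (mult n A)) (mult n (Box A)))"
| mp: "Kthm A \<Longrightarrow> Kthm (Imp A B) \<Longrightarrow> Kthm B"
| nec: "Kthm A \<Longrightarrow> Kthm (Box A)"
| con: "n \<ge> 2 \<Longrightarrow> Kthm (mult n A) \<Longrightarrow> Kthm A"

inductive GK :: "fm multiset \<Rightarrow> fm multiset \<Rightarrow> bool" where
  gid: "GK D D"
| gcut: "GK (G + {#A#}) D \<Longrightarrow> GK P ({#A#} + S) \<Longrightarrow> GK (G + P) (S + D)"
| gmix: "GK G D \<Longrightarrow> GK P S \<Longrightarrow> GK (G + P) (S + D)"
| gsc: "n \<ge> 2 \<Longrightarrow> GK (repeat_mset n G) (repeat_mset n D) \<Longrightarrow> GK G D"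
| gimpL: "GK (G + {#B#}) ({#A#} + D) \<Longrightarrow> GK (G + {#Imp A B#}) D"
| gimpR: "GK (G + {#A#}) ({#B#} + D) \<Longrightarrow> GK G ({#Imp A B#} + D)"
| gbox: "GK G (replicate_mset n A) \<Longrightarrow> GK (image_mset Box G) (replicate_mset n (Box A))"

fun Fuss :: "fm list \<Rightarrow> fm" where
  "Fuss [] = zero"
| "Fuss [A] = A"
| "Fuss (A # B # As) = Fus A (Fuss (B # As))"

definition Interp :: "fm list \<Rightarrow> fm list \<Rightarrow> fm" where
  "Interp gs ds = Imp (Fuss gs) (Fuss ds)"

end

theory Submission
  imports Defs
begin

lemma kmp: "Kthm A \<Longrightarrow> Kthm (Imp A B) \<Longrightarrow> Kthm B" by (rule mp)
lemma ktrans: "Kthm (Imp A B) \<Longrightarrow> Kthm (Imp B C) \<Longrightarrow> Kthm (Imp A C)"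
  by (meson axB mp)
lemma kperm: "Kthm (Imp A (Imp B C)) \<Longrightarrow> Kthm (Imp B (Imp A C))"
  by (meson axC mp)
lemma ksuffix: "Kthm (Imp A B) \<Longrightarrow> Kthm (Imp (Imp B C) (Imp A C))"
  by (meson axB mp)
lemma kprefix: "Kthm (Imp B C) \<Longrightarrow> Kthm (Imp (Imp A B) (Imp A C))"
  by (meson axB kperm mp)
lemma kassert: "Kthm (Imp A (Imp (Imp A B) B))"
  by (rule kperm) (rule axI)

definition E :: "fm \<Rightarrow> fm \<Rightarrow> bool" where
  "E A B \<longleftrightarrow> Kthm (Imp A B) \<and> Kthm (Imp B A)"

lemma E_equivp: "equivp E"
  unfolding E_def by (rule equivpI; auto simp: reflp_def symp_def transp_def intro: axI ktrans)

quotient_type fq = fm / E by (rule E_equivp)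

lift_definition qimp :: "fq \<Rightarrow> fq \<Rightarrow> fq" is Imp
  unfolding E_def by (meson ksuffix kprefix ktrans)

lift_definition qbox :: "fq \<Rightarrow> fq" is Box
  unfolding E_def by (meson axK nec mp)

lift_definition qthm :: "fq \<Rightarrow> bool" is Kthm
  unfolding E_def by (meson mp)

lift_definition cls :: "fm \<Rightarrow> fq" is "\<lambda>x. x" .

lemma cls_surj: "\<exists>a. x = cls a"
  by (metis Quotient3_abs_rep Quotient3_fq cls.abs_eq)

lemma cls_eq: "Kthm (Imp A B) \<Longrightarrow> Kthm (Imp B A) \<Longrightarrow> cls A = cls B"
  by (metis E_def cls.abs_eq fq.abs_eq_iff)

lemma qimp_cls: "qimp (cls A) (cls B) = cls (Imp A B)"
  by (metis cls.abs_eq qimp.abs_eq)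
lemma qbox_cls: "qbox (cls A) = cls (Box A)"
  by (metis cls.abs_eq qbox.abs_eq)
lemma qthm_cls: "qthm (cls A) = Kthm A"
  by (metis cls.abs_eq qthm.abs_eq)

lemma Q1: "qimp x (qimp y z) = qimp y (qimp x z)"
proof -
  obtain a b c where "x = cls a" "y = cls b" "z = cls c" using cls_surj by metis
  thus ?thesis by (simp add: qimp_cls cls_eq axC)
qed

lemma Q2: "qimp (qimp x y) y = x"
proof -
  obtain a b where "x = cls a" "y = cls b" using cls_surj by metis
  thus ?thesis by (simp add: qimp_cls cls_eq axA kassert)
qed

lemma qthm_mp: "qthm x \<Longrightarrow> qthm (qimp x y) \<Longrightarrow> qthm y"
  by (metis cls_surj qimp_cls qthm_cls mp)

lemma qantisym: "qthm (qimp x y) \<Longrightarrow> qthm (qimp y x) \<Longrightarrow> x = y"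
  by (metis cls_surj qimp_cls qthm_cls cls_eq)

lemma qB: "qthm (qimp (qimp x y) (qimp (qimp y z) (qimp x z)))"
  by (metis cls_surj qimp_cls qthm_cls axB)

lemma Q4: "qimp x y = qimp (qimp y z) (qimp x z)"
proof (rule qantisym)
  show "qthm (qimp (qimp x y) (qimp (qimp y z) (qimp x z)))" by (rule qB)
  have "qthm (qimp (qimp (qimp y z) (qimp x z)) (qimp (qimp (qimp x z) z) (qimp (qimp y z) z)))"
    by (rule qB)
  thus "qthm (qimp (qimp (qimp y z) (qimp x z)) (qimp x y))" by (simp add: Q2)
qed

definition qo :: fq where "qo = cls zero"

lemma qoo: "qimp qo qo = qo"
proof -
  define p where "p = cls p0"
  have o: "qo = qimp p p" by (simp add: qo_def p_def zero_def qimp_cls)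
  have "qimp qo p = p" using Q2[of p p] o by simp
  hence "qo = qimp p (qimp qo p)" using o by simp
  also have "\<dots> = qimp qo (qimp p p)" by (rule Q1)
  finally show ?thesis using o by simp
qed

lemma qo_imp: "qimp qo y = y"
  by (metis Q2 Q4 qoo)

lemma qimp_self: "qimp u u = qo"
  using Q2[of qo u] qo_imp by simp

instantiation fq :: ab_group_add
begin
definition "zero_fq = qo"
definition "plus_fq x y = qimp (qimp x qo) y"
definition "uminus_fq x = qimp x qo"
definition "minus_fq (x::fq) y = x + - y"
instance
proof
  fix a b c :: fq
  show "a + b + c = a + (b + c)"
    unfolding plus_fq_def by (metis Q1 Q2 Q4)
  show "a + b = b + a"
    unfolding plus_fq_def by (metis Q2 Q4)
  show "0 + a = a"
    unfolding plus_fq_def zero_fq_def by (simp add: qoo qo_imp)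
  show "- a + a = 0"
    unfolding plus_fq_def zero_fq_def uminus_fq_def by (simp add: Q2 qimp_self)
  show "a - b = a + - b" by (simp add: minus_fq_def)
qed
end

lemma qimp_diff: "qimp x y = y - x"
  unfolding minus_fq_def plus_fq_def uminus_fq_def by (rule Q4)

lemma cls_Imp: "cls (Imp A B) = cls B - cls A"
  by (simp add: qimp_cls[symmetric] qimp_diff)
lemma cls_zero: "cls zero = 0"
  by (simp add: zero_fq_def qo_def)
lemma cls_Neg: "cls (Neg A) = - cls A"
  by (simp add: Neg_def cls_Imp cls_zero)
lemma cls_Fus: "cls (Fus A B) = cls A + cls B"
  by (simp add: Fus_def cls_Imp cls_Neg)

lemma qthm_Imp: "Kthm (Imp A B) \<longleftrightarrow> qthm (cls B - cls A)"
  by (simp add: qthm_cls[symmetric] cls_Imp)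

lemma qthm_0: "qthm 0"
  by (metis qthm_cls cls_zero axI zero_def)

lemma qthm_add: "qthm a \<Longrightarrow> qthm b \<Longrightarrow> qthm (a + b)"
  by (metis qthm_mp qimp_diff add_diff_cancel_right')

lemma qthm_subst: "qthm a \<Longrightarrow> a = b \<Longrightarrow> qthm b" by simp

fun ntimes :: "nat \<Rightarrow> fq \<Rightarrow> fq" where
  "ntimes 0 x = 0"
| "ntimes (Suc n) x = x + ntimes n x"

lemma ntimes_diff: "ntimes n (a - b) = ntimes n a - ntimes n b"
  by (induction n) (auto simp: algebra_simps)

lemma cls_mult: "cls (mult n A) = ntimes n (cls A)"
  by (induction n) (auto simp: cls_zero cls_Fus)

lemma qcon: "n \<ge> 2 \<Longrightarrow> qthm (ntimes n x) \<Longrightarrow> qthm x"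
  by (metis cls_surj cls_mult qthm_cls con)

lemma qmono: "qthm (b - a) \<Longrightarrow> qthm (qbox b - qbox a)"
  by (metis cls_surj qbox_cls qthm_Imp axK nec mp)

lemma qK: "qthm (qbox b - qbox a - qbox (b - a))"
proof -
  obtain x y where "a = cls x" "b = cls y" using cls_surj by metis
  thus ?thesis using axK[of x y] by (simp add: qthm_Imp cls_Imp flip: qbox_cls)
qed

lemma qD: "n \<ge> 2 \<Longrightarrow> qthm (ntimes n (qbox a) - qbox (ntimes n a))"
proof -
  assume n: "n \<ge> 2"
  obtain x where "a = cls x" using cls_surj by metis
  thus ?thesis using axD[OF n, of x] by (simp add: qthm_Imp cls_mult flip: qbox_cls)
qed

lemma qbox0: "qthm (qbox 0)"
  by (metis qthm_cls qbox_cls cls_zero axI zero_def nec)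

lemma qbox0': "qthm (- qbox 0)"
  using qK[of 0 0] by simp

lemma qsuper: "qthm (qbox (a + b) - qbox a - qbox b)"
  using qK[of "a + b" a] by simp

lemma qsuper_mset: "qthm (qbox (sum_mset M) - sum_mset (image_mset qbox M))"
proof (induction M)
  case empty then show ?case using qbox0 by simp
next
  case (add x M)
  have "qthm ((qbox (x + sum_mset M) - qbox x - qbox (sum_mset M)) +
     (qbox (sum_mset M) - sum_mset (image_mset qbox M)))"
    by (rule qthm_add[OF qsuper add.IH])
  then show ?case by (rule qthm_subst) (simp add: algebra_simps)
qed

lemma qD_all: "qthm (ntimes n (qbox a) - qbox (ntimes n a))"
proof (cases "n \<ge> 2")
  case True then show ?thesis by (rule qD)
next
  case False
  then have "n = 0 \<or> n = 1" by auto
  then show ?thesis using qbox0' qthm_0 by auto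
qed

abbreviation SM :: "fm multiset \<Rightarrow> fq" where "SM M \<equiv> sum_mset (image_mset cls M)"

lemma SM_repeat: "SM (repeat_mset n M) = ntimes n (SM M)"
  by (induction n) auto

lemma sum_replicate: "sum_mset (replicate_mset n c) = ntimes n c"
  by (induction n) auto

lemma SM_replicate: "SM (replicate_mset n A) = ntimes n (cls A)"
  by (induction n) auto

lemma SM_box: "SM (image_mset Box M) = sum_mset (image_mset qbox (image_mset cls M))"
  by (simp add: multiset.map_comp comp_def qbox_cls)

lemma sound: "GK G D \<Longrightarrow> qthm (SM D - SM G)"
proof (induction rule: GK.induct)
  case (gid D) then show ?case using qthm_0 by simp
next
  case (gcut G A D P S)
  from qthm_add[OF gcut.IH] show ?case by (rule qthm_subst) (simp add: algebra_simps)
next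
  case (gmix G D P S)
  from qthm_add[OF gmix.IH] show ?case by (rule qthm_subst) (simp add: algebra_simps)
next
  case (gsc n G D)
  have "qthm (ntimes n (SM D - SM G))"
    using gsc.IH by (simp add: SM_repeat ntimes_diff)
  then show ?case using qcon gsc.hyps by blast
next
  case (gimpL G B A D)
  from gimpL.IH show ?case by (rule qthm_subst) (simp add: cls_Imp algebra_simps)
next
  case (gimpR G A B D)
  from gimpR.IH show ?case by (rule qthm_subst) (simp add: cls_Imp algebra_simps)
next
  case (gbox G n A)
  let ?g = "sum_mset (image_mset cls G)"
  have 1: "qthm (qbox (ntimes n (cls A)) - qbox ?g)"
    using gbox.IH by (intro qmono) (simp add: sum_replicate)
  have "qthm ((ntimes n (qbox (cls A)) - qbox (ntimes n (cls A))) + (qbox (ntimes n (cls A)) - qbox ?g)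
     + (qbox ?g - sum_mset (image_mset qbox (image_mset cls G))))"
    by (intro qthm_add qD_all 1 qsuper_mset)
  then show ?case by (rule qthm_subst) (simp add: SM_box sum_replicate qbox_cls)
qed

lemma cls_Fuss: "cls (Fuss l) = sum_list (map cls l)"
  by (induction l rule: Fuss.induct) (auto simp: cls_zero cls_Fus)

lemma soundness: "GK (mset gs) (mset ds) \<Longrightarrow> Kthm (Interp gs ds)"
  using sound[of "mset gs" "mset ds"]
  by (simp add: Interp_def qthm_Imp cls_Fuss sum_mset_sum_list flip: mset_map)


lemma gk_eq: "GK G D \<Longrightarrow> G = G' \<Longrightarrow> D = D' \<Longrightarrow> GK G' D'" by simp

lemma gzeroL: "GK {#zero#} {#}"
  using gimpL[of "{#}" p0 p0 "{#}"] gid[of "{#p0#}"] by (simp add: zero_def)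
lemma gzeroR: "GK {#} {#zero#}"
  using gimpR[of "{#}" p0 p0 "{#}"] gid[of "{#p0#}"] by (simp add: zero_def)

lemma gself: "GK {#Imp x x#} {#}"
  using gimpL[of "{#}" x x "{#}"] gid[of "{#x#}"] by simp

lemma cancel1: "GK (add_mset x G) (add_mset x D) \<Longrightarrow> GK G D"
proof -
  assume h: "GK (add_mset x G) (add_mset x D)"
  have "GK G ({#Imp x x#} + D)" using gimpR[of G x x D] h by simp
  from gcut[of "{#}" "Imp x x" "{#}", OF _ this] gself show ?thesis by simp
qed

lemma cancel: "GK (G + M) (M + D) \<Longrightarrow> GK G D"
proof (induction M arbitrary: G D)
  case empty then show ?case by simp
next
  case (add x M)
  then have "GK (add_mset x (G + M)) (add_mset x (M + D))" by simp
  then show ?case using cancel1 add.IH by blast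
qed

lemma mcut: "GK (G + M) D \<Longrightarrow> GK P (M + S) \<Longrightarrow> GK (G + P) (S + D)"
proof -
  assume a: "GK (G + M) D" and b: "GK P (M + S)"
  from gmix[OF a b] have "GK ((G + P) + M) (M + (S + D))" by (simp add: ac_simps)
  then show ?thesis by (rule cancel)
qed

lemma cut1: "GK G {#A#} \<Longrightarrow> GK {#A#} D \<Longrightarrow> GK G D"
  using mcut[of "{#}" "{#A#}" D G "{#}"] by simp

lemma gimpE: "GK {#A, Imp A B#} {#B#}"
  using gimpL[of "{#A#}" B A "{#B#}"] gid[of "{#A, B#}"] by (simp add: add_mset_commute)

lemma FusL: "GK {#Fus A B#} {#A, B#}"
proof -
  have "GK ({#B#} + {#A#}) ({#zero#} + {#A, B#})"
    by (rule gk_eq[OF gmix[OF gid[of "{#B,A#}"] gzeroR]]) (simp_all add: add_mset_commute)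
  from gimpR[OF this] have "GK ({#} + {#B#}) ({#Neg A#} + {#A, B#})" by (simp add: Neg_def)
  from gimpL[OF this] show ?thesis by (simp add: Fus_def)
qed

lemma FusR: "GK {#A, B#} {#Fus A B#}"
proof -
  have "GK ({#A, B#} + {#zero#}) ({#A#} + {#B#})"
    by (rule gk_eq[OF gmix[OF gid[of "{#A,B#}"] gzeroL]]) (simp_all add: add_mset_commute)
  from gimpL[OF this] have "GK ({#A, B#} + {#Neg A#}) ({#B#} + {#}) " by (simp add: Neg_def)
  from gimpR[OF this] show ?thesis by (simp add: Fus_def)
qed

lemma multL: "GK {#mult n A#} (replicate_mset n A)"
proof (induction n)
  case 0 then show ?case using gzeroL by simp
next
  case (Suc n)
  have a: "GK ({#} + {#mult n A#}) (replicate_mset n A)" using Suc by simp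
  have b: "GK {#Fus A (mult n A)#} ({#mult n A#} + {#A#})" by (rule gk_eq[OF FusL]) simp_all
  from mcut[OF a b] show ?case by simp
qed

lemma multR: "GK (replicate_mset n A) {#mult n A#}"
proof (induction n)
  case 0 then show ?case using gzeroR by simp
next
  case (Suc n)
  have a: "GK ({#A#} + {#mult n A#}) {#Fus A (mult n A)#}" by (rule gk_eq[OF FusR]) simp_all
  have b: "GK (replicate_mset n A) ({#mult n A#} + {#})" using Suc by simp
  from mcut[OF a b] show ?case by simp
qed

lemma FussL: "GK {#Fuss l#} (mset l)"
proof (induction l rule: Fuss.induct)
  case 1 then show ?case using gzeroL by simp
next
  case (2 A) then show ?case using gid by simp
next
  case (3 A B As)
  have a: "GK ({#} + {#Fuss (B # As)#}) (mset (B # As))" using 3 by simp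
  have b: "GK {#Fus A (Fuss (B # As))#} ({#Fuss (B # As)#} + {#A#})" by (rule gk_eq[OF FusL]) simp_all
  from mcut[OF a b] have "GK {#Fus A (Fuss (B # As))#} ({#A#} + mset (B # As))" by simp
  then show ?case by (rule gk_eq) (simp_all add: add_mset_commute)
qed

lemma FussR: "GK (mset l) {#Fuss l#}"
proof (induction l rule: Fuss.induct)
  case 1 then show ?case using gzeroR by simp
next
  case (2 A) then show ?case using gid by simp
next
  case (3 A B As)
  have a: "GK ({#A#} + {#Fuss (B # As)#}) {#Fus A (Fuss (B # As))#}" by (rule gk_eq[OF FusR]) simp_all
  have b: "GK (mset (B # As)) ({#Fuss (B # As)#} + {#})" using 3 by simp
  from mcut[OF a b] have "GK ({#A#} + mset (B # As)) {#Fus A (Fuss (B # As))#}" by simp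
  then show ?case by (rule gk_eq) (simp_all add: add_mset_commute)
qed

lemma kgk: "Kthm A \<Longrightarrow> GK {#} {#A#}"
proof (induction rule: Kthm.induct)
  case (axB A B C)
  have "GK ({#A, B#} + {#C#}) ({#B#} + {#A, C#})"
    by (rule gk_eq[OF gid[of "{#A,B,C#}"]]) (simp_all add: add_mset_commute)
  from gimpL[OF this] have "GK ({#A, Imp B C#} + {#B#}) ({#A#} + {#C#})"
    by (rule gk_eq) (simp_all add: add_mset_commute)
  from gimpL[OF this] have "GK ({#A, Imp B C#} + {#Imp A B#}) {#C#}" .
  hence "GK ({#Imp A B, Imp B C#} + {#A#}) ({#C#} + {#})" by (rule gk_eq) (simp_all add: add_mset_commute)
  from gimpR[OF this] have "GK ({#Imp A B#} + {#Imp B C#}) ({#Imp A C#} + {#})" by (rule gk_eq) (simp_all add: add_mset_commute)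
  from gimpR[OF this] have "GK ({#} + {#Imp A B#}) ({#Imp (Imp B C) (Imp A C)#} + {#})" by simp
  from gimpR[OF this] show ?case by simp
next
  case (axC A B C)
  have "GK ({#B, A#} + {#C#}) ({#B#} + {#A, C#})"
    by (rule gk_eq[OF gid[of "{#B, A, C#}"]]) (simp_all add: add_mset_commute)
  from gimpL[OF this] have "GK ({#B, A#} + {#Imp B C#}) ({#A#} + {#C#})"
    by (simp add: add_mset_commute)
  from gimpL[OF this] have "GK ({#Imp A (Imp B C), B#} + {#A#}) ({#C#} + {#})"
    by (rule gk_eq) (simp_all add: add_mset_commute)
  from gimpR[OF this] have "GK ({#Imp A (Imp B C)#} + {#B#}) ({#Imp A C#} + {#})" by (rule gk_eq) (simp_all add: add_mset_commute)
  from gimpR[OF this] have "GK ({#} + {#Imp A (Imp B C)#}) ({#Imp B (Imp A C)#} + {#})" by simp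
  from gimpR[OF this] show ?case by simp
next
  case (axI A)
  then show ?case using gimpR[of "{#}" A A "{#}"] gid[of "{#A#}"] by simp
next
  case (axA A B)
  have "GK ({#B#} + {#A#}) ({#B#} + {#A#})" by (rule gid)
  from gimpR[OF this] have "GK ({#} + {#B#}) ({#Imp A B#} + {#A#})" by simp
  from gimpL[OF this] have "GK ({#} + {#Imp (Imp A B) B#}) ({#A#} + {#})" by simp
  from gimpR[OF this] show ?case by simp
next
  case (axK A B)
  have "GK {#A, Imp A B#} (replicate_mset 1 B)" using gimpE by simp
  from gbox[OF this] have "GK ({#Box (Imp A B)#} + {#Box A#}) ({#Box B#} + {#})"
    by (simp add: add_mset_commute)
  from gimpR[OF this] have "GK ({#} + {#Box (Imp A B)#}) ({#Imp (Box A) (Box B)#} + {#})" by simp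
  from gimpR[OF this] show ?case by simp
next
  case (axD n A)
  from gbox[OF multL[of n A]]
  have a: "GK {#Box (mult n A)#} (replicate_mset n (Box A))" by simp
  have b: "GK ({#} + replicate_mset n (Box A)) {#mult n (Box A)#}" using multR by simp
  have c: "GK {#Box (mult n A)#} (replicate_mset n (Box A) + {#})" using a by simp
  from mcut[OF b c] have "GK ({#} + {#Box (mult n A)#}) ({#mult n (Box A)#} + {#})" by simp
  from gimpR[OF this] show ?case by simp
next
  case (mp A B)
  have a: "GK ({#A#} + {#Imp A B#}) {#B#}" using gimpE by (simp add: add_mset_commute)
  have b: "GK {#} ({#Imp A B#} + {#})" using mp.IH(2) by simp
  from mcut[OF a b] have "GK {#A#} {#B#}" by simp
  then show ?case using cut1[OF mp.IH(1)] by simp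
next
  case (nec A)
  from gbox[of "{#}" 1 A] nec.IH show ?case by simp
next
  case (con n A)
  from cut1[OF con.IH multL] have "GK {#} (replicate_mset n A)" .
  then have "GK (repeat_mset n {#}) (repeat_mset n {#A#})" by simp
  from gsc[OF con.hyps(1) this] show ?case .
qed

lemma completeness: "Kthm (Interp gs ds) \<Longrightarrow> GK (mset gs) (mset ds)"
proof -
  assume "Kthm (Interp gs ds)"
  then have h: "GK {#} {#Imp (Fuss gs) (Fuss ds)#}" unfolding Interp_def by (rule kgk)
  have a: "GK ({#Fuss gs#} + {#Imp (Fuss gs) (Fuss ds)#}) {#Fuss ds#}"
    using gimpE by (simp add: add_mset_commute)
  have b: "GK {#} ({#Imp (Fuss gs) (Fuss ds)#} + {#})" using h by simp
  from mcut[OF a b] have "GK {#Fuss gs#} {#Fuss ds#}" by simp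
  then have "GK (mset gs) {#Fuss ds#}" using cut1[OF FussR] by blast
  then show ?thesis using cut1 FussL by blast
qed

theorem proposition4p3:
  fixes gs ds :: "fm list"
  shows "GK (mset gs) (mset ds) \<longleftrightarrow> Kthm (Interp gs ds)"
  using soundness completeness by blast

end
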